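(* Online gradient descent with a fixed restart schedule (as defined in the context) is a linear forecaster. Consequently, for fixed constants $C>0$, $U>0$, $\sigma>0$, its worst-case expected cumulative squared error $\sup_{\theta_{1:n}}\mathbb{E}\big[\sum_{t=1}^n(x_t-\theta_t)^2\big]$, the supremum being over $\theta_{1:n}\in\mathrm{TV}(C)$ with $|\theta_1|\le U$, is at least $\tilde\Omega(\sqrt n)$ as $n\to\infty$, whatever the restart schedule and step sizes.
   Context: Setting: $y_t=\theta_t+Z_t$ with $Z_1,\dots,Z_n$ independent zero-mean $\sigma$-subgaussian noise; the forecaster outputs $x_t$ based on $y_1,\dots,y_{t-1}$ only. $\mathrm{TV}(C)=\{\theta_{1:n}:\sum_{i=2}^n|\theta_i-\theta_{i-1}|\le C\}$. A linear forecaster is one whose predictions satisfy $x_t=\sum_{s<t}a_{t,s}y_s$ for a fixed, data-independent array of coefficients $a_{t,s}$. Online gradient descent (OGD) with a fixed restart schedule: the time axis $1,\dots,n$ is partitioned into consecutive blocks by a schedule fixed in advance; at the start of each block the iterate is reset to a fixed linear combination of past observations (e.g. $0$ or the previous observation), and within a block it is updated by $x_{t+1}=x_t-\eta_t\cdot 2(x_t-y_t)$ (the stochastic gradient of the loss $(x-\theta_t)^2$) with fixed, data-independent step sizes $\eta_t$. $\tilde\Omega$ hides logarithmic factors in $n$. *)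

theory Defs
  imports "HOL-Probability.Probability"
begin

text \<open>Time indices are 1-based: t = 1..n. Observations y :: nat => real.\<close>

definition linear_forecaster :: "((nat \<Rightarrow> real) \<Rightarrow> nat \<Rightarrow> real) \<Rightarrow> bool" where
  "linear_forecaster f \<longleftrightarrow>
     (\<exists>a :: nat \<Rightarrow> nat \<Rightarrow> real. \<forall>y t. 1 \<le> t \<longrightarrow> f y t = (\<Sum>s\<in>{1..<t}. a t s * y s))"

text \<open>R = set of block start times (time 1 is always
  a block start); at a block start t the iterate is reset to the fixed linear combination
  sum_{s<t} b t s * y s of past observations; inside a block
  x_{t+1} = x_t - eta_t * 2 (x_t - y_t).\<close>
fun ogd :: "nat set \<Rightarrow> (nat \<Rightarrow> nat \<Rightarrow> real) \<Rightarrow> (nat \<Rightarrow> real) \<Rightarrow> (nat \<Rightarrow> real) \<Rightarrow> nat \<Rightarrow> real" where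
  "ogd R b eta y 0 = 0"
| "ogd R b eta y (Suc t) =
     (if t = 0 \<or> Suc t \<in> R then (\<Sum>s\<in>{1..<Suc t}. b (Suc t) s * y s)
      else ogd R b eta y t - eta t * (2 * (ogd R b eta y t - y t)))"

definition TV :: "nat \<Rightarrow> real \<Rightarrow> (nat \<Rightarrow> real) set" where
  "TV n C = {\<theta>. (\<Sum>i\<in>{2..n}. \<bar>\<theta> i - \<theta> (i - 1)\<bar>) \<le> C}"

text \<open>Noise Z_1..Z_n i.i.d. N(0, sigma^2) (a zero-mean sigma-subgaussian law).\<close>
definition noise :: "real \<Rightarrow> nat \<Rightarrow> (nat \<Rightarrow> real) measure" where
  "noise \<sigma> n = (\<Pi>\<^sub>M t\<in>{1..n}. density lborel (normal_density 0 \<sigma>))"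

definition risk :: "((nat \<Rightarrow> real) \<Rightarrow> nat \<Rightarrow> real) \<Rightarrow> real \<Rightarrow> nat \<Rightarrow> (nat \<Rightarrow> real) \<Rightarrow> ennreal" where
  "risk f \<sigma> n \<theta> =
     (\<integral>\<^sup>+ Z. ennreal (\<Sum>t\<in>{1..n}. (f (\<lambda>s. \<theta> s + Z s) t - \<theta> t)\<^sup>2) \<partial>noise \<sigma> n)"

definition worst_risk :: "((nat \<Rightarrow> real) \<Rightarrow> nat \<Rightarrow> real) \<Rightarrow> real \<Rightarrow> real \<Rightarrow> real \<Rightarrow> nat \<Rightarrow> ennreal" where
  "worst_risk f C U \<sigma> n = (SUP \<theta>\<in>{\<theta>\<in>TV n C. \<bar>\<theta> 1\<bar> \<le> U}. risk f \<sigma> n \<theta>)"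

end

theory Submission
  imports Defs
begin

lemma M0_facts:
  fixes \<sigma> :: real
  assumes s: "\<sigma> > 0"
  defines "M0 \<equiv> density lborel (normal_density 0 \<sigma>)"
  shows "prob_space M0"
    and "integrable M0 (\<lambda>x. x)" and "integral\<^sup>L M0 (\<lambda>x. x) = 0"
    and "integrable M0 (\<lambda>x. x * x)" and "integral\<^sup>L M0 (\<lambda>x. x * x) = \<sigma>\<^sup>2"
    and "integrable M0 (\<lambda>x. 1::real)" and "integral\<^sup>L M0 (\<lambda>x. 1::real) = 1"
proof -
  show ps: "prob_space M0" unfolding M0_def using prob_space_normal_density[OF s] .
  show "integrable M0 (\<lambda>x. x)" unfolding M0_def
    by (subst integrable_real_density) (auto simp: integrable_normal_moment_nz_1[OF s])
  show "integral\<^sup>L M0 (\<lambda>x. x) = 0" unfolding M0_def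
    by (subst integral_real_density) (auto simp: integral_normal_moment_nz_1[OF s])
  have i2: "integrable lborel (\<lambda>x. normal_density 0 \<sigma> x * (x - 0)^2)"
    by (rule integrable_normal_moment[OF s])
  show "integrable M0 (\<lambda>x. x * x)" unfolding M0_def
    using i2 by (subst integrable_real_density) (auto simp: power2_eq_square)
  have e2: "integral\<^sup>L lborel (\<lambda>x. normal_density 0 \<sigma> x * (x - 0)^(2*1)) = fact (2 * 1) / ((2 / \<sigma>\<^sup>2)^1 * fact 1)"
    by (rule integral_normal_moment_even[OF s])
  show "integral\<^sup>L M0 (\<lambda>x. x * x) = \<sigma>\<^sup>2" unfolding M0_def
    using e2 s by (subst integral_real_density) (auto simp: power2_eq_square)
  show "integrable M0 (\<lambda>x. 1::real)" using ps by (simp add: prob_space_def finite_measure.integrable_const)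
  show "integral\<^sup>L M0 (\<lambda>x. 1::real) = 1" using prob_space.prob_space[OF ps] by (simp add: lebesgue_integral_const)
qed

lemma prod_moments:
  fixes \<sigma> :: real and I :: "nat set"
  assumes s: "\<sigma> > 0" and fin: "finite I" and sI: "s \<in> I" and rI: "r \<in> I"
  defines "M0 \<equiv> density lborel (normal_density 0 \<sigma>)"
  shows "integrable (PiM I (\<lambda>_. M0)) (\<lambda>z. z s * z r)"
    and "integral\<^sup>L (PiM I (\<lambda>_. M0)) (\<lambda>z. z s * z r) = (if s = r then \<sigma>\<^sup>2 else 0)"
    and "integrable (PiM I (\<lambda>_. M0)) (\<lambda>z. z s)"
    and "integral\<^sup>L (PiM I (\<lambda>_. M0)) (\<lambda>z. z s) = 0"
proof -
  note F = M0_facts[OF s, folded M0_def]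
  interpret product_sigma_finite "\<lambda>_::nat. M0"
    unfolding product_sigma_finite_def using F(1) by (simp add: prob_space_imp_sigma_finite)
  define g where "g = (\<lambda>i x. if i = s then x else (1::real))"
  have gi: "integrable M0 (g i)" for i
  proof (cases "i = s")
    case True then show ?thesis using F(2) by (simp add: g_def)
  next
    case False then show ?thesis using F(6) by (simp add: g_def)
  qed
  have gp: "(\<Prod>i\<in>I. g i (z i)) = z s" for z using fin sI by (simp add: g_def prod.delta)
  show "integrable (PiM I (\<lambda>_. M0)) (\<lambda>z. z s)"
    using product_integrable_prod[OF fin, of g] gi by (simp add: gp)
  have "integral\<^sup>L (PiM I (\<lambda>_. M0)) (\<lambda>z. z s) = (\<Prod>i\<in>I. integral\<^sup>L M0 (g i))"
    using product_integral_prod[OF fin, of g] gi by (simp add: gp)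
  also have "\<dots> = 0" using fin sI F(3) by (intro prod_zero) (auto simp: g_def intro!: bexI[of _ s])
  finally show "integral\<^sup>L (PiM I (\<lambda>_. M0)) (\<lambda>z. z s) = 0" .
  define h where "h = (\<lambda>i x. (if i = s then x else (1::real)) * (if i = r then x else 1))"
  have hi: "integrable M0 (h i)" for i
  proof -
    consider "i = s" "i = r" | "i = s" "i \<noteq> r" | "i \<noteq> s" "i = r" | "i \<noteq> s" "i \<noteq> r" by blast
    then show ?thesis using F(2,4,6) by cases (simp_all add: h_def)
  qed
  have hp: "(\<Prod>i\<in>I. h i (z i)) = z s * z r" for z using fin sI rI
    by (simp add: h_def prod.distrib prod.delta)
  show "integrable (PiM I (\<lambda>_. M0)) (\<lambda>z. z s * z r)"
    using product_integrable_prod[OF fin, of h] hi by (simp add: hp)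
  have "integral\<^sup>L (PiM I (\<lambda>_. M0)) (\<lambda>z. z s * z r) = (\<Prod>i\<in>I. integral\<^sup>L M0 (h i))"
    using product_integral_prod[OF fin, of h] hi by (simp add: hp)
  also have "\<dots> = (if s = r then \<sigma>\<^sup>2 else 0)"
  proof (cases "s = r")
    case True
    have "(\<Prod>i\<in>I. integral\<^sup>L M0 (h i)) = (\<Prod>i\<in>I. if i = s then \<sigma>\<^sup>2 else 1)"
      using F(5,7) True by (intro prod.cong) (simp_all add: h_def)
    then show ?thesis using True fin sI by (simp add: prod.delta)
  next
    case False
    have "integral\<^sup>L M0 (h s) = 0" using F(3) False by (simp add: h_def)
    then show ?thesis using False fin sI by (intro trans[OF prod_zero]) auto
  qed
  finally show "integral\<^sup>L (PiM I (\<lambda>_. M0)) (\<lambda>z. z s * z r) = (if s = r then \<sigma>\<^sup>2 else 0)" .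
qed

lemma quad_moment:
  fixes \<sigma> \<beta> :: real and I S :: "nat set" and a :: "nat \<Rightarrow> real"
  assumes s: "\<sigma> > 0" and fin: "finite I" and SI: "S \<subseteq> I"
  defines "M0 \<equiv> density lborel (normal_density 0 \<sigma>)"
  shows "has_bochner_integral (PiM I (\<lambda>_. M0)) (\<lambda>z. (\<beta> + (\<Sum>s\<in>S. a s * z s))\<^sup>2)
           (\<beta>\<^sup>2 + \<sigma>\<^sup>2 * (\<Sum>s\<in>S. (a s)\<^sup>2))"
proof -
  let ?P = "PiM I (\<lambda>_. M0)"
  note F = M0_facts[OF s, folded M0_def]
  have finS: "finite S" using fin SI finite_subset by blast
  have psP: "prob_space ?P" by (rule prob_space_PiM) (use F(1) in auto)
  have hb1: "has_bochner_integral ?P (\<lambda>z. z s * z r) (if s = r then \<sigma>\<^sup>2 else 0)"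
    if "s \<in> S" "r \<in> S" for s r
  proof -
    have "s \<in> I" "r \<in> I" using that SI by auto
    from prod_moments[OF s fin this, folded M0_def] show ?thesis
      by (simp add: has_bochner_integral_iff)
  qed
  have hb0: "has_bochner_integral ?P (\<lambda>z. z s) 0" if "s \<in> S" for s
  proof -
    have "s \<in> I" using that SI by auto
    from prod_moments[OF s fin this this, folded M0_def] show ?thesis
      by (simp add: has_bochner_integral_iff)
  qed
  have hbc: "has_bochner_integral ?P (\<lambda>z. \<beta>\<^sup>2) (\<beta>\<^sup>2)"
    using psP prob_space.prob_space[OF psP]
    by (simp add: has_bochner_integral_iff prob_space_def finite_measure.integrable_const lebesgue_integral_const)
  have H: "has_bochner_integral ?P
     (\<lambda>z. \<beta>\<^sup>2 + (\<Sum>s\<in>S. (2*\<beta>*a s) * z s) + (\<Sum>s\<in>S. \<Sum>r\<in>S. (a s * a r) * (z s * z r)))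
     (\<beta>\<^sup>2 + (\<Sum>s\<in>S. (2*\<beta>*a s) * 0) + (\<Sum>s\<in>S. \<Sum>r\<in>S. (a s * a r) * (if s = r then \<sigma>\<^sup>2 else 0)))"
    by (intro has_bochner_integral_add has_bochner_integral_sum has_bochner_integral_mult_right hbc hb0 hb1)
  have eqf: "(\<beta> + (\<Sum>s\<in>S. a s * z s))\<^sup>2 =
     \<beta>\<^sup>2 + (\<Sum>s\<in>S. (2*\<beta>*a s) * z s) + (\<Sum>s\<in>S. \<Sum>r\<in>S. (a s * a r) * (z s * z r))" for z :: "nat \<Rightarrow> real"
  proof -
    have "(\<Sum>s\<in>S. a s * z s) * (\<Sum>s\<in>S. a s * z s) = (\<Sum>s\<in>S. \<Sum>r\<in>S. (a s * a r) * (z s * z r))"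
      by (simp add: sum_product mult_ac)
    moreover have "2 * \<beta> * (\<Sum>s\<in>S. a s * z s) = (\<Sum>s\<in>S. (2*\<beta>*a s) * z s)"
      by (simp add: sum_distrib_left mult_ac)
    ultimately show ?thesis by (simp add: power2_eq_square algebra_simps)
  qed
  have eqv: "(\<Sum>s\<in>S. \<Sum>r\<in>S. (a s * a r) * (if s = r then \<sigma>\<^sup>2 else 0)) = \<sigma>\<^sup>2 * (\<Sum>s\<in>S. (a s)\<^sup>2)"
  proof -
    have "(\<Sum>s\<in>S. \<Sum>r\<in>S. (a s * a r) * (if s = r then \<sigma>\<^sup>2 else 0)) = (\<Sum>s\<in>S. \<sigma>\<^sup>2 * (a s)\<^sup>2)"
    proof (rule sum.cong[OF refl])
      fix s assume "s \<in> S"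
      have "(\<Sum>r\<in>S. (a s * a r) * (if s = r then \<sigma>\<^sup>2 else 0)) = (\<Sum>r\<in>S. if s = r then a s * a r * \<sigma>\<^sup>2 else 0)"
        by (rule sum.cong) auto
      also have "\<dots> = \<sigma>\<^sup>2 * (a s)\<^sup>2" using finS \<open>s \<in> S\<close> by (simp add: sum.delta power2_eq_square)
      finally show "(\<Sum>r\<in>S. (a s * a r) * (if s = r then \<sigma>\<^sup>2 else 0)) = \<sigma>\<^sup>2 * (a s)\<^sup>2" .
    qed
    then show ?thesis by (simp add: sum_distrib_left)
  qed
  show ?thesis using H unfolding eqf[symmetric] eqv by simp
qed

lemma risk_linear:
  fixes \<sigma> :: real and f :: "(nat \<Rightarrow> real) \<Rightarrow> nat \<Rightarrow> real" and a :: "nat \<Rightarrow> nat \<Rightarrow> real"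
  assumes s: "\<sigma> > 0" and lin: "\<forall>y t. 1 \<le> t \<longrightarrow> f y t = (\<Sum>s\<in>{1..<t}. a t s * y s)"
  shows "risk f \<sigma> n \<theta> = ennreal (\<Sum>t\<in>{1..n}. ((\<Sum>s\<in>{1..<t}. a t s * \<theta> s) - \<theta> t)\<^sup>2
                                        + \<sigma>\<^sup>2 * (\<Sum>s\<in>{1..<t}. (a t s)\<^sup>2))"
proof -
  let ?M0 = "density lborel (normal_density 0 \<sigma>)"
  let ?b = "\<lambda>t. (\<Sum>s\<in>{1..<t}. a t s * \<theta> s) - \<theta> t"
  have eq: "(\<Sum>t\<in>{1..n}. (f (\<lambda>s. \<theta> s + Z s) t - \<theta> t)\<^sup>2)
          = (\<Sum>t\<in>{1..n}. (?b t + (\<Sum>s\<in>{1..<t}. a t s * Z s))\<^sup>2)" for Z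
  proof (rule sum.cong[OF refl])
    fix t assume "t \<in> {1..n}"
    then have "f (\<lambda>s. \<theta> s + Z s) t = (\<Sum>s\<in>{1..<t}. a t s * (\<theta> s + Z s))" using lin by auto
    also have "\<dots> = (\<Sum>s\<in>{1..<t}. a t s * \<theta> s) + (\<Sum>s\<in>{1..<t}. a t s * Z s)"
      by (simp add: distrib_left sum.distrib)
    finally show "(f (\<lambda>s. \<theta> s + Z s) t - \<theta> t)\<^sup>2 = (?b t + (\<Sum>s\<in>{1..<t}. a t s * Z s))\<^sup>2"
      by (simp add: algebra_simps)
  qed
  have H: "has_bochner_integral (noise \<sigma> n) (\<lambda>Z. \<Sum>t\<in>{1..n}. (?b t + (\<Sum>s\<in>{1..<t}. a t s * Z s))\<^sup>2)
       (\<Sum>t\<in>{1..n}. (?b t)\<^sup>2 + \<sigma>\<^sup>2 * (\<Sum>s\<in>{1..<t}. (a t s)\<^sup>2))"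
    unfolding noise_def
  proof (rule has_bochner_integral_sum)
    fix t assume "t \<in> {1..n}"
    then have "{1..<t} \<subseteq> {1..n}" by auto
    from quad_moment[OF s _ this, of "?b t" "a t"]
    show "has_bochner_integral (PiM {1..n} (\<lambda>_. ?M0)) (\<lambda>Z. (?b t + (\<Sum>s\<in>{1..<t}. a t s * Z s))\<^sup>2)
       ((?b t)\<^sup>2 + \<sigma>\<^sup>2 * (\<Sum>s\<in>{1..<t}. (a t s)\<^sup>2))" by simp
  qed
  have "risk f \<sigma> n \<theta> = (\<integral>\<^sup>+ Z. ennreal (\<Sum>t\<in>{1..n}. (?b t + (\<Sum>s\<in>{1..<t}. a t s * Z s))\<^sup>2) \<partial>noise \<sigma> n)"
    unfolding risk_def eq ..
  also have "\<dots> = ennreal (integral\<^sup>L (noise \<sigma> n) (\<lambda>Z. \<Sum>t\<in>{1..n}. (?b t + (\<Sum>s\<in>{1..<t}. a t s * Z s))\<^sup>2))"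
    by (rule nn_integral_eq_integral) (use H in \<open>auto simp: has_bochner_integral_iff intro!: sum_nonneg\<close>)
  also have "\<dots> = ennreal (\<Sum>t\<in>{1..n}. (?b t)\<^sup>2 + \<sigma>\<^sup>2 * (\<Sum>s\<in>{1..<t}. (a t s)\<^sup>2))"
    using H by (simp add: has_bochner_integral_iff)
  finally show ?thesis .
qed

lemma per_t:
  fixes a :: "nat \<Rightarrow> real" and C K :: real and M t :: nat
  assumes M: "M \<ge> 1" and t: "t \<ge> M + 1" and C: "C > 0" and K: "K \<ge> 0"
  shows "min (C\<^sup>2 * M / 4) (K / (4 * M)) \<le>
    (\<Sum>\<tau>\<in>{t+1-M..t}. (C * (\<Sum>s\<in>{\<tau>..<t}. a s) - C)\<^sup>2) + K * (\<Sum>s\<in>{1..<t}. (a s)\<^sup>2)"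
proof (cases "\<forall>\<tau>\<in>{t+1-M..t}. (\<Sum>s\<in>{\<tau>..<t}. a s) \<le> 1/2")
  case True
  have "\<And>\<tau>. \<tau> \<in> {t+1-M..t} \<Longrightarrow> C\<^sup>2 / 4 \<le> (C * (\<Sum>s\<in>{\<tau>..<t}. a s) - C)\<^sup>2"
  proof -
    fix \<tau> assume "\<tau> \<in> {t+1-M..t}"
    with True have p: "(\<Sum>s\<in>{\<tau>..<t}. a s) \<le> 1/2" by auto
    define P where "P = (\<Sum>s\<in>{\<tau>..<t}. a s)"
    have "C * P \<le> C * (1/2)" using p C unfolding P_def[symmetric]
      by (intro mult_left_mono) auto
    then have "C/2 \<le> C - C * P" by simp
    then have "(C/2)\<^sup>2 \<le> (C - C * P)\<^sup>2" using C by (intro power_mono) auto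
    then show "C\<^sup>2 / 4 \<le> (C * (\<Sum>s\<in>{\<tau>..<t}. a s) - C)\<^sup>2"
      unfolding P_def[symmetric] by (simp add: power2_eq_square algebra_simps)
  qed
  then have A: "real (card {t+1-M..t}) * (C\<^sup>2/4) \<le> (\<Sum>\<tau>\<in>{t+1-M..t}. (C * (\<Sum>s\<in>{\<tau>..<t}. a s) - C)\<^sup>2)"
    by (intro sum_bounded_below) auto
  have "card {t+1-M..t} = M" using t by simp
  with A have "real M * (C\<^sup>2/4) \<le> (\<Sum>\<tau>\<in>{t+1-M..t}. (C * (\<Sum>s\<in>{\<tau>..<t}. a s) - C)\<^sup>2)"
    by simp
  moreover have "0 \<le> K * (\<Sum>s\<in>{1..<t}. (a s)\<^sup>2)" using K by (intro mult_nonneg_nonneg sum_nonneg) auto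
  moreover have "C\<^sup>2 * M / 4 = real M * (C\<^sup>2/4)" by simp
  ultimately show ?thesis using min.cobounded1[of "C\<^sup>2 * M / 4" "K / (4 * M)"] by linarith
next
  case False
  then obtain \<tau> where tau: "\<tau> \<in> {t+1-M..t}" and p: "(\<Sum>s\<in>{\<tau>..<t}. a s) > 1/2" by auto
  define P where "P = (\<Sum>s\<in>{\<tau>..<t}. a s)"
  have "P\<^sup>2 \<le> (\<Sum>s\<in>{\<tau>..<t}. (a s)\<^sup>2) * card {\<tau>..<t}"
    unfolding P_def by (rule sum_squared_le_sum_of_squares)
  also have "\<dots> \<le> (\<Sum>s\<in>{1..<t}. (a s)\<^sup>2) * M"
  proof (rule mult_mono)
    show "(\<Sum>s\<in>{\<tau>..<t}. (a s)\<^sup>2) \<le> (\<Sum>s\<in>{1..<t}. (a s)\<^sup>2)"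
      using tau t by (intro sum_mono2) auto
    show "real (card {\<tau>..<t}) \<le> real M" using tau t by auto
  qed (auto intro: sum_nonneg)
  finally have "P\<^sup>2 \<le> (\<Sum>s\<in>{1..<t}. (a s)\<^sup>2) * M" .
  moreover have "(1/2)\<^sup>2 < P\<^sup>2" using p unfolding P_def[symmetric]
    by (intro power_strict_mono) auto
  ultimately have "1 \<le> (\<Sum>s\<in>{1..<t}. (a s)\<^sup>2) * (4 * M)"
    by (simp add: power2_eq_square)
  then have V: "1 / (4 * M) \<le> (\<Sum>s\<in>{1..<t}. (a s)\<^sup>2)" using M
    by (subst pos_divide_le_eq) auto
  have "K / (4 * M) \<le> K * (\<Sum>s\<in>{1..<t}. (a s)\<^sup>2)"
    using mult_left_mono[OF V K] by simp
  moreover have "0 \<le> (\<Sum>\<tau>\<in>{t+1-M..t}. (C * (\<Sum>s\<in>{\<tau>..<t}. a s) - C)\<^sup>2)" by (intro sum_nonneg) auto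
  ultimately show ?thesis using min.cobounded2[of "C\<^sup>2 * M / 4" "K / (4 * M)"] by linarith
qed

lemma arith_core:
  fixes \<sigma> C :: real and n M :: nat
  assumes s: "\<sigma> > 0" and C: "C > 0" and n: "n \<ge> 2"
    and h1: "C\<^sup>2 \<le> \<sigma>\<^sup>2 * (real n - 1)" and h2: "16 * \<sigma>\<^sup>2 \<le> C\<^sup>2 * real n"
    and Mdef: "M = nat \<lceil>\<sigma> * sqrt (real n - 1) / C\<rceil>"
  shows "M \<ge> 1" and "2 * M \<le> n"
    and "\<sigma> * C * sqrt (real n - 1) / 8 \<le> min (C\<^sup>2 * M / 4) ((real n - 1) * \<sigma>\<^sup>2 / (4 * M))"
    and "(real n - 1) * (\<sigma> * C / 16 * sqrt (real n)) \<le> real (n - M) * (\<sigma> * C * sqrt (real n - 1) / 8)"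
proof -
  define x where "x = \<sigma> * sqrt (real n - 1) / C"
  define r where "r = sqrt (real n - 1)"
  define q where "q = sqrt (real n)"
  have xr: "x = \<sigma> * r / C" by (simp add: x_def r_def)
  have r2: "r\<^sup>2 = real n - 1" "r \<ge> 0" using n by (auto simp: r_def)
  have q2: "q\<^sup>2 = real n" "q \<ge> 0" by (auto simp: q_def)
  have rq: "r \<le> q" unfolding r_def q_def by (rule real_sqrt_le_mono) simp
  have "C \<le> \<sigma> * r"
  proof -
    have "C\<^sup>2 \<le> (\<sigma> * r)\<^sup>2" using h1 r2 by (simp add: power_mult_distrib)
    then show ?thesis using s r2 by (meson power2_le_imp_le mult_nonneg_nonneg less_imp_le)
  qed
  then have x1: "x \<ge> 1" using C by (simp add: x_def r_def[symmetric] field_simps)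
  have Mx: "x \<le> M" "M \<le> x + 1" unfolding Mdef x_def[symmetric] using x1
    by linarith+
  show M1: "M \<ge> 1" using Mx x1 by linarith
  have "4 * \<sigma> \<le> C * q"
  proof -
    have "(4 * \<sigma>)\<^sup>2 \<le> (C * q)\<^sup>2" using h2 q2 by (simp add: power_mult_distrib)
    then show ?thesis using C q2 by (meson power2_le_imp_le mult_nonneg_nonneg less_imp_le)
  qed
  then have "2 * x \<le> real n / 2"
  proof -
    assume a: "4 * \<sigma> \<le> C * q"
    have "2 * x = 2 * \<sigma> * r / C" by (simp add: x_def r_def)
    also have "\<dots> \<le> 2 * \<sigma> * q / C" using s C rq by (simp add: divide_right_mono)
    also have "\<dots> \<le> C * q * q / (2 * C)"
    proof -
      have "4 * \<sigma> * q \<le> C * q * q" using mult_right_mono[OF a q2(2)] by simp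
      then show ?thesis using C by (simp add: field_simps)
    qed
    also have "\<dots> = real n / 2" using C q2 by (simp add: power2_eq_square)
    finally show ?thesis .
  qed
  then show "2 * M \<le> n" using Mx x1 by linarith
  have g1: "\<sigma> * C * r / 8 \<le> C\<^sup>2 * M / 4"
  proof -
    have "\<sigma> * C * r / 8 \<le> C\<^sup>2 * x / 4" using C s r2 by (simp add: x_def r_def[symmetric] power2_eq_square)
    also have "\<dots> \<le> C\<^sup>2 * M / 4" using Mx C by (simp add: mult_left_mono)
    finally show ?thesis .
  qed
  have g2: "\<sigma> * C * r / 8 \<le> (real n - 1) * \<sigma>\<^sup>2 / (4 * M)"
  proof -
    have "(real n - 1) * \<sigma>\<^sup>2 / (4 * (2 * x)) \<le> (real n - 1) * \<sigma>\<^sup>2 / (4 * M)"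
      using Mx x1 n s by (intro divide_left_mono) auto
    moreover have "(real n - 1) * \<sigma>\<^sup>2 / (4 * (2 * x)) = \<sigma> * C * r / 8"
    proof -
      have rp: "r > 0" proof (rule ccontr)
        assume "\<not> r > 0" then have "r = 0" using r2(2) by simp
        then show False using \<open>C \<le> \<sigma> * r\<close> C by simp
      qed
      have "(real n - 1) * \<sigma>\<^sup>2 / (4 * (2 * x)) = r\<^sup>2 * \<sigma>\<^sup>2 / (4 * (2 * (\<sigma> * r / C)))"
        by (simp only: r2(1) xr)
      also have "\<dots> = \<sigma> * C * r / 8" using rp C s by (simp add: field_simps power2_eq_square)
      finally show ?thesis .
    qed
    ultimately show ?thesis by linarith
  qed
  show "\<sigma> * C * sqrt (real n - 1) / 8 \<le> min (C\<^sup>2 * M / 4) ((real n - 1) * \<sigma>\<^sup>2 / (4 * M))"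
    using g1 g2 by (simp add: r_def)
  have nM: "real n / 2 \<le> real (n - M)" using \<open>2 * M \<le> n\<close> by linarith
  have "(real n - 1) * (\<sigma> * C / 16 * q) = \<sigma> * C / 16 * (r * (r * q))" using r2 by (simp add: power2_eq_square)
  also have "\<dots> \<le> \<sigma> * C / 16 * (q * (q * r))"
  proof -
    have "r * (r * q) \<le> q * (r * q)" using rq r2 q2 by (intro mult_right_mono) auto
    then have "r * (r * q) \<le> q * (q * r)" by (simp add: mult_ac)
    then show ?thesis using s C by (intro mult_left_mono) auto
  qed
  also have "\<dots> = real n / 2 * (\<sigma> * C * r / 8)" using q2 by (simp add: power2_eq_square)
  also have "\<dots> \<le> real (n - M) * (\<sigma> * C * r / 8)"
    using nM s C r2 by (intro mult_right_mono) auto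
  finally show "(real n - 1) * (\<sigma> * C / 16 * sqrt (real n)) \<le> real (n - M) * (\<sigma> * C * sqrt (real n - 1) / 8)"
    by (simp add: r_def q_def)
qed

lemma lower:
  fixes f :: "(nat \<Rightarrow> real) \<Rightarrow> nat \<Rightarrow> real" and a :: "nat \<Rightarrow> nat \<Rightarrow> real"
    and \<sigma> C U :: real and n :: nat
  assumes s: "\<sigma> > 0" and C: "C > 0" and U: "U > 0"
    and lin: "\<forall>y t. 1 \<le> t \<longrightarrow> f y t = (\<Sum>s\<in>{1..<t}. a t s * y s)"
    and n: "n \<ge> 2" and h1: "C\<^sup>2 \<le> \<sigma>\<^sup>2 * (real n - 1)" and h2: "16 * \<sigma>\<^sup>2 \<le> C\<^sup>2 * real n"
  shows "ennreal (\<sigma> * C / 16 * sqrt (real n)) \<le> worst_risk f C U \<sigma> n"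
proof -
  define M where "M = nat \<lceil>\<sigma> * sqrt (real n - 1) / C\<rceil>"
  note AC = arith_core[OF s C n h1 h2 M_def]
  define \<theta> where "\<theta> = (\<lambda>\<tau>::nat. \<lambda>s::nat. if \<tau> \<le> s then C else (0::real))"
  define b where "b = (\<lambda>\<tau> t. (\<Sum>s\<in>{1..<t}. a t s * \<theta> \<tau> s) - \<theta> \<tau> t)"
  define V where "V = (\<lambda>t. \<Sum>s\<in>{1..<t}. (a t s)\<^sup>2)"
  define Rr where "Rr = (\<lambda>\<tau>. \<Sum>t\<in>{1..n}. (b \<tau> t)\<^sup>2 + \<sigma>\<^sup>2 * V t)"
  define L where "L = \<sigma> * C / 16 * sqrt (real n)"
  define g where "g = \<sigma> * C * sqrt (real n - 1) / 8"
  have mem: "\<theta> \<tau> \<in> {\<theta> \<in> TV n C. \<bar>\<theta> 1\<bar> \<le> U}" if "\<tau> \<in> {2..n}" for \<tau>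
  proof -
    have "(\<Sum>i\<in>{2..n}. \<bar>\<theta> \<tau> i - \<theta> \<tau> (i-1)\<bar>) = (\<Sum>i\<in>{2..n}. if i = \<tau> then C else 0)"
      by (rule sum.cong) (use that C in \<open>auto simp: \<theta>_def\<close>)
    also have "\<dots> = C" using that by (simp add: sum.delta)
    finally show ?thesis using that U by (auto simp: TV_def \<theta>_def)
  qed
  have rk: "risk f \<sigma> n (\<theta> \<tau>) = ennreal (Rr \<tau>)" for \<tau>
    using risk_linear[OF s lin, of n "\<theta> \<tau>"] by (simp add: Rr_def b_def V_def)
  have up: "ennreal (Rr \<tau>) \<le> worst_risk f C U \<sigma> n" if "\<tau> \<in> {2..n}" for \<tau>
    unfolding worst_risk_def rk[symmetric] using mem[OF that] by (rule SUP_upper)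
  have bt: "b \<tau> t = C * (\<Sum>s\<in>{\<tau>..<t}. a t s) - C" if "1 \<le> \<tau>" "\<tau> \<le> t" for \<tau> t
  proof -
    have "(\<Sum>s\<in>{1..<t}. a t s * \<theta> \<tau> s) = (\<Sum>s\<in>{1..<t}. if \<tau> \<le> s then a t s * C else 0)"
      by (rule sum.cong) (auto simp: \<theta>_def)
    also have "\<dots> = (\<Sum>s\<in>{s\<in>{1..<t}. \<tau> \<le> s}. a t s * C)"
      by (rule sum.inter_filter[symmetric]) simp
    also have "{s\<in>{1..<t}. \<tau> \<le> s} = {\<tau>..<t}" using that by auto
    finally show ?thesis using that by (simp add: b_def \<theta>_def sum_distrib_left mult.commute)
  qed
  define H where "H = (\<lambda>t. \<Sum>\<tau>\<in>{2..n}. (b \<tau> t)\<^sup>2 + \<sigma>\<^sup>2 * V t)"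
  have Hnn: "0 \<le> H t" for t unfolding H_def V_def by (intro sum_nonneg add_nonneg_nonneg mult_nonneg_nonneg) auto
  have Hg: "g \<le> H t" if t: "t \<in> {M+1..n}" for t
  proof -
    have cn: "real (card {2..n}) = real n - 1" using n by simp
    have "H t = (\<Sum>\<tau>\<in>{2..n}. (b \<tau> t)\<^sup>2) + (real n - 1) * \<sigma>\<^sup>2 * V t"
      unfolding H_def sum.distrib using cn by simp
    moreover have "(\<Sum>\<tau>\<in>{t+1-M..t}. (b \<tau> t)\<^sup>2) \<le> (\<Sum>\<tau>\<in>{2..n}. (b \<tau> t)\<^sup>2)"
      using t AC(1) by (intro sum_mono2) auto
    moreover have "(\<Sum>\<tau>\<in>{t+1-M..t}. (b \<tau> t)\<^sup>2) = (\<Sum>\<tau>\<in>{t+1-M..t}. (C * (\<Sum>s\<in>{\<tau>..<t}. a t s) - C)\<^sup>2)"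
    proof (rule sum.cong[OF refl])
      fix \<tau> assume "\<tau> \<in> {t+1-M..t}"
      then have "1 \<le> \<tau>" "\<tau> \<le> t" using t by auto
      then show "(b \<tau> t)\<^sup>2 = (C * (\<Sum>s\<in>{\<tau>..<t}. a t s) - C)\<^sup>2" by (simp add: bt)
    qed
    moreover have "min (C\<^sup>2 * M / 4) (((real n - 1) * \<sigma>\<^sup>2) / (4 * M)) \<le>
        (\<Sum>\<tau>\<in>{t+1-M..t}. (C * (\<Sum>s\<in>{\<tau>..<t}. a t s) - C)\<^sup>2) + ((real n - 1) * \<sigma>\<^sup>2) * (\<Sum>s\<in>{1..<t}. (a t s)\<^sup>2)"
      using t AC(1) C n by (intro per_t) auto
    ultimately show ?thesis using AC(3) unfolding g_def V_def by linarith
  qed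
  have "(real n - 1) * L \<le> real (n - M) * g" using AC(4) by (simp add: L_def g_def)
  also have "\<dots> = real (card {M+1..n}) * g" by simp
  also have "\<dots> \<le> (\<Sum>t\<in>{M+1..n}. H t)" using Hg by (intro sum_bounded_below) auto
  also have "\<dots> \<le> (\<Sum>t\<in>{1..n}. H t)" using Hnn AC(1) by (intro sum_mono2) auto
  also have "\<dots> = (\<Sum>\<tau>\<in>{2..n}. Rr \<tau>)" unfolding H_def Rr_def by (rule sum.swap)
  finally have tot: "(real n - 1) * L \<le> (\<Sum>\<tau>\<in>{2..n}. Rr \<tau>)" .
  have "\<exists>\<tau>\<in>{2..n}. L \<le> Rr \<tau>"
  proof (rule ccontr)
    assume "\<not> ?thesis"
    then have "\<forall>\<tau>\<in>{2..n}. Rr \<tau> < L" by auto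
    then have "(\<Sum>\<tau>\<in>{2..n}. Rr \<tau>) < (\<Sum>\<tau>\<in>{2..n}. L)" using n by (intro sum_strict_mono) auto
    also have "\<dots> = (real n - 1) * L" using n by simp
    finally show False using tot by simp
  qed
  then obtain \<tau> where "\<tau> \<in> {2..n}" "L \<le> Rr \<tau>" by auto
  then have "ennreal L \<le> ennreal (Rr \<tau>)" by (intro ennreal_leI) simp
  also have "\<dots> \<le> worst_risk f C U \<sigma> n" using up \<open>\<tau> \<in> {2..n}\<close> by blast
  finally show ?thesis by (simp add: L_def)
qed

fun ogd_coef :: "nat set \<Rightarrow> (nat \<Rightarrow> nat \<Rightarrow> real) \<Rightarrow> (nat \<Rightarrow> real) \<Rightarrow> nat \<Rightarrow> nat \<Rightarrow> real" where
  "ogd_coef R b eta 0 s = 0"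
| "ogd_coef R b eta (Suc t) s =
     (if t = 0 \<or> Suc t \<in> R then b (Suc t) s
      else if s < t then (1 - 2 * eta t) * ogd_coef R b eta t s
      else if s = t then 2 * eta t else 0)"

lemma ogd_linear_eq: "ogd R b eta y t = (\<Sum>s\<in>{1..<t}. ogd_coef R b eta t s * y s)"
proof (induction t)
  case 0
  then show ?case by simp
next
  case (Suc t)
  show ?case
  proof (cases "t = 0 \<or> Suc t \<in> R")
    case True
    have c: "ogd_coef R b eta (Suc t) s = b (Suc t) s" for s
      by (simp only: ogd_coef.simps if_P[OF True])
    have "ogd R b eta y (Suc t) = (\<Sum>s\<in>{1..<Suc t}. b (Suc t) s * y s)"
      by (simp only: ogd.simps if_P[OF True])
    then show ?thesis by (simp only: c)
  next
    case False
    then have t1: "t \<ge> 1" by simp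
    have set: "{1..<Suc t} = insert t {1..<t}" using t1 by auto
    have "(\<Sum>s\<in>{1..<Suc t}. ogd_coef R b eta (Suc t) s * y s)
        = ogd_coef R b eta (Suc t) t * y t + (\<Sum>s\<in>{1..<t}. ogd_coef R b eta (Suc t) s * y s)"
      unfolding set by (rule sum.insert) auto
    also have "(\<Sum>s\<in>{1..<t}. ogd_coef R b eta (Suc t) s * y s)
        = (1 - 2 * eta t) * (\<Sum>s\<in>{1..<t}. ogd_coef R b eta t s * y s)"
      unfolding sum_distrib_left by (rule sum.cong) (use False in auto)
    finally show ?thesis using False Suc.IH by (simp add: algebra_simps)
  qed
qed

theorem proposition1:
  fixes C U \<sigma> :: real
    and R :: "nat \<Rightarrow> nat set"
    and b :: "nat \<Rightarrow> nat \<Rightarrow> nat \<Rightarrow> real"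
    and eta :: "nat \<Rightarrow> nat \<Rightarrow> real"
  assumes "C > 0" and "U > 0" and "\<sigma> > 0"
  shows "(\<forall>n. linear_forecaster (ogd (R n) (b n) (eta n))) \<and>
         (\<exists>c>0. \<exists>k::nat. \<forall>\<^sub>F n in sequentially.
             ennreal (c * sqrt (real n) / (ln (real n)) ^ k)
               \<le> worst_risk (ogd (R n) (b n) (eta n)) C U \<sigma> n)"
proof
  have lin: "\<forall>y t. 1 \<le> t \<longrightarrow> ogd (R n) (b n) (eta n) y t = (\<Sum>s\<in>{1..<t}. ogd_coef (R n) (b n) (eta n) t s * y s)" for n
    by (simp add: ogd_linear_eq)
  then show "\<forall>n. linear_forecaster (ogd (R n) (b n) (eta n))"
    unfolding linear_forecaster_def by blast
  define N0 where "N0 = nat \<lceil>C\<^sup>2 / \<sigma>\<^sup>2 + 16 * \<sigma>\<^sup>2 / C\<^sup>2\<rceil> + 2"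
  have ev: "\<forall>\<^sub>F n in sequentially. ennreal (\<sigma> * C / 16 * sqrt (real n) / (ln (real n)) ^ 0)
               \<le> worst_risk (ogd (R n) (b n) (eta n)) C U \<sigma> n"
    unfolding eventually_sequentially
  proof (intro exI allI impI)
    fix n assume "N0 \<le> n"
    then have nr: "real n \<ge> C\<^sup>2 / \<sigma>\<^sup>2 + 16 * \<sigma>\<^sup>2 / C\<^sup>2 + 2" and n2: "n \<ge> 2"
      unfolding N0_def by linarith+
    have p1: "C\<^sup>2 / \<sigma>\<^sup>2 \<ge> 0" "16 * \<sigma>\<^sup>2 / C\<^sup>2 \<ge> 0" by auto
    have "C\<^sup>2 / \<sigma>\<^sup>2 \<le> real n - 1" using nr p1 by linarith
    then have h1: "C\<^sup>2 \<le> \<sigma>\<^sup>2 * (real n - 1)" using assms(3)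
      by (simp add: pos_divide_le_eq mult.commute)
    have "16 * \<sigma>\<^sup>2 / C\<^sup>2 \<le> real n" using nr p1 by linarith
    then have h2: "16 * \<sigma>\<^sup>2 \<le> C\<^sup>2 * real n" using assms(1)
      by (simp add: pos_divide_le_eq mult.commute)
    show "ennreal (\<sigma> * C / 16 * sqrt (real n) / (ln (real n)) ^ 0)
               \<le> worst_risk (ogd (R n) (b n) (eta n)) C U \<sigma> n"
      using lower[OF assms(3,1,2) lin n2 h1 h2] by simp
  qed
  show "\<exists>c>0. \<exists>k::nat. \<forall>\<^sub>F n in sequentially.
             ennreal (c * sqrt (real n) / (ln (real n)) ^ k)
               \<le> worst_risk (ogd (R n) (b n) (eta n)) C U \<sigma> n"
    using ev assms by (intro exI[of _ "\<sigma> * C / 16"] conjI exI[of _ 0]) auto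
qed

end
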